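(* Let $\mathcal{S}_1=\langle\mathcal{L},\vdash_1\rangle$ and $\mathcal{S}_2=\langle\mathcal{L},\vdash_2\rangle$ be logics with $\vdash_1\,\subseteq\,\vdash_2$. Then $\vdash_1^l\,\subseteq\,\vdash_2^l$. Moreover, if $\mathcal{S}_1$ and $\mathcal{S}_2$ are Hilbert-style logics such that for every rule $(\Gamma,\alpha)$ of the restricted rules companion $\mathcal{S}_1^{re}$ one has $\Gamma\vdash_2^{re}\alpha$, then $\vdash_1^{re}\,\subseteq\,\vdash_2^{re}$.
   Context: A logic is a pair $\langle\mathcal{L},\vdash\rangle$ where $\mathcal{L}$ is the formula algebra over a set of variables $V$ of some finite signature and $\vdash\subseteq\mathcal{P}(\mathcal{L})\times\mathcal{L}$ is arbitrary. $\mathrm{var}(\alpha)$ is the set of variables in $\alpha$, $\mathrm{var}(\Delta)=\bigcup_{\alpha\in\Delta}\mathrm{var}(\alpha)$. Left variable inclusion companion: $\Gamma\vdash^l\alpha$ iff there is $\Delta\subseteq\Gamma$ with $\mathrm{var}(\Delta)\subseteq\mathrm{var}(\alpha)$ and $\Delta\vdash\alpha$. A Hilbert-style logic is given by axioms $A\subseteq\mathcal{L}$ and rules $R\subseteq\mathcal{P}(\mathcal{L})\times\mathcal{L}$: $\Sigma\vdash\alpha$ iff there is a finite sequence $\alpha_1,\ldots,\alpha_n=\alpha$ with each $\alpha_i\in A$, or $\alpha_i\in\Sigma$, or $(\Delta,\alpha_i)\in R$ for some $\Delta\subseteq\{\alpha_1,\ldots,\alpha_{i-1}\}$. Its restricted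 rules companion $\mathcal{S}^{re}=\langle\mathcal{L},\vdash^{re}\rangle$ is the Hilbert-style logic with axioms $A$ and rules $R_{\mathcal{S}^{re}}=\{(\Gamma,\alpha)\in R\mid\mathrm{var}(\Gamma)\subseteq\mathrm{var}(\alpha)\}$. *)

theory Defs
  imports Main
begin

text \<open>The set of formulas L is the set of well-formed terms.\<close>

datatype ('v, 's) form = Var 'v | Op 's "('v, 's) form list"

inductive_set formulas :: "('s \<Rightarrow> nat) \<Rightarrow> ('v, 's) form set" for ar where
  var_wf: "Var x \<in> formulas ar"
| op_wf: "\<lbrakk>length args = ar c; \<forall>a \<in> set args. a \<in> formulas ar\<rbrakk> \<Longrightarrow> Op c args \<in> formulas ar"

fun var :: "('v, 's) form \<Rightarrow> 'v set" where
  "var (Var x) = {x}"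
| "var (Op c args) = (\<Union>a \<in> set args. var a)"

definition vars :: "('v, 's) form set \<Rightarrow> 'v set" where
  "vars \<Delta> = (\<Union>\<alpha> \<in> \<Delta>. var \<alpha>)"

definition is_logic :: "('v, 's) form set \<Rightarrow> (('v, 's) form set \<times> ('v, 's) form) set \<Rightarrow> bool" where
  "is_logic L C \<longleftrightarrow> C \<subseteq> Pow L \<times> L"

definition lvi :: "(('v, 's) form set \<times> ('v, 's) form) set \<Rightarrow> (('v, 's) form set \<times> ('v, 's) form) set" where
  "lvi C = {(\<Gamma>, \<alpha>). \<exists>\<Delta> \<subseteq> \<Gamma>. vars \<Delta> \<subseteq> var \<alpha> \<and> (\<Delta>, \<alpha>) \<in> C}"

definition hilbert :: "('v, 's) form set \<Rightarrow> ('v, 's) form set \<Rightarrow> (('v, 's) form set \<times> ('v, 's) form) set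
    \<Rightarrow> (('v, 's) form set \<times> ('v, 's) form) set" where
  "hilbert L A R = {(\<Sigma>, \<alpha>). \<Sigma> \<subseteq> L \<and> \<alpha> \<in> L \<and>
     (\<exists>xs. xs \<noteq> [] \<and> last xs = \<alpha> \<and>
        (\<forall>i < length xs. xs ! i \<in> A \<or> xs ! i \<in> \<Sigma> \<or>
            (\<exists>\<Delta>. (\<Delta>, xs ! i) \<in> R \<and> \<Delta> \<subseteq> set (take i xs))))}"

definition restrict_rules :: "(('v, 's) form set \<times> ('v, 's) form) set \<Rightarrow> (('v, 's) form set \<times> ('v, 's) form) set" where
  "restrict_rules R = {(\<Gamma>, \<alpha>) \<in> R. vars \<Gamma> \<subseteq> var \<alpha>}"

definition hilbert_re :: "('v, 's) form set \<Rightarrow> ('v, 's) form set \<Rightarrow> (('v, 's) form set \<times> ('v, 's) form) set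
    \<Rightarrow> (('v, 's) form set \<times> ('v, 's) form) set" where
  "hilbert_re L A R = hilbert L A (restrict_rules R)"

end

theory Submission
  imports Defs
begin

definition dvalid :: "('v, 's) form set \<Rightarrow> ('v, 's) form set \<Rightarrow> (('v, 's) form set \<times> ('v, 's) form) set \<Rightarrow> ('v, 's) form list \<Rightarrow> bool" where
  "dvalid A S R xs = (\<forall>i < length xs. xs ! i \<in> A \<or> xs ! i \<in> S \<or>
            (\<exists>\<Delta>. (\<Delta>, xs ! i) \<in> R \<and> \<Delta> \<subseteq> set (take i xs)))"

definition okd :: "('v, 's) form set \<Rightarrow> ('v, 's) form set \<Rightarrow> (('v, 's) form set \<times> ('v, 's) form) set \<Rightarrow> ('v, 's) form set \<Rightarrow> ('v, 's) form \<Rightarrow> bool" where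
  "okd A S R T x = (x \<in> A \<or> x \<in> S \<or> (\<exists>\<Delta>. (\<Delta>, x) \<in> R \<and> \<Delta> \<subseteq> T))"

lemma dvalid_snoc: "dvalid A S R (xs @ [x]) \<longleftrightarrow> dvalid A S R xs \<and> okd A S R (set xs) x"
  unfolding dvalid_def okd_def
  by (auto simp: nth_append less_Suc_eq; metis less_Suc_eq)

lemma dvalid_take: "dvalid A S R xs \<Longrightarrow> dvalid A S R (take n xs)"
  unfolding dvalid_def by (auto simp: min_def split: if_splits)

lemma dvalid_mono: "S \<subseteq> S' \<Longrightarrow> dvalid A S R xs \<Longrightarrow> dvalid A S' R xs"
  unfolding dvalid_def by blast

lemma dvalid_app:
  assumes "dvalid A S R ws"
  shows "dvalid A (S \<union> set ws) R zs \<Longrightarrow> \<exists>ws'. dvalid A S R ws' \<and> set ws' = set ws \<union> set zs"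
proof (induction zs rule: rev_induct)
  case Nil
  then show ?case using assms by auto
next
  case (snoc z zs)
  then have v: "dvalid A (S \<union> set ws) R zs" and o: "okd A (S \<union> set ws) R (set zs) z"
    by (auto simp: dvalid_snoc)
  from snoc.IH[OF v] obtain ws' where w: "dvalid A S R ws'" "set ws' = set ws \<union> set zs" by blast
  show ?case
  proof (cases "z \<in> set ws'")
    case True
    then show ?thesis using w by (intro exI[of _ ws']) auto
  next
    case False
    have "okd A S R (set ws') z" using o False w unfolding okd_def by auto
    then show ?thesis using w by (intro exI[of _ "ws' @ [z]"]) (auto simp: dvalid_snoc)
  qed
qed

lemma hilbert_dvalid: "(S, a) \<in> hilbert L A R \<longleftrightarrow> S \<subseteq> L \<and> a \<in> L \<and> (\<exists>xs. xs \<noteq> [] \<and> last xs = a \<and> dvalid A S R xs)"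
  unfolding hilbert_def dvalid_def by auto

lemma part2:
  assumes ax: "\<forall>\<alpha> \<in> A1. ({}, \<alpha>) \<in> hilbert L A2 R2"
    and ru: "\<forall>(\<Gamma>, \<alpha>) \<in> R1. (\<Gamma>, \<alpha>) \<in> hilbert L A2 R2"
  shows "dvalid A1 S R1 xs \<Longrightarrow> \<exists>ws. dvalid A2 S R2 ws \<and> set xs \<subseteq> set ws"
proof (induction xs rule: rev_induct)
  case Nil
  then show ?case by (intro exI[of _ "[]"]) (auto simp: dvalid_def)
next
  case (snoc x xs)
  then have v: "dvalid A1 S R1 xs" and o: "okd A1 S R1 (set xs) x" by (auto simp: dvalid_snoc)
  from snoc.IH[OF v] obtain ws where w: "dvalid A2 S R2 ws" "set xs \<subseteq> set ws" by blast
  have key: "\<exists>ws'. dvalid A2 S R2 ws' \<and> set ws \<subseteq> set ws' \<and> x \<in> set ws'"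
    if "(D, x) \<in> hilbert L A2 R2" "D \<subseteq> set ws" for D
  proof -
    from that(1) obtain zs where z: "zs \<noteq> []" "last zs = x" "dvalid A2 D R2 zs"
      by (auto simp: hilbert_dvalid)
    have "dvalid A2 (S \<union> set ws) R2 zs" using that(2) by (intro dvalid_mono[OF _ z(3)]) auto
    from dvalid_app[OF w(1) this] obtain ws' where "dvalid A2 S R2 ws'" "set ws' = set ws \<union> set zs"
      by blast
    then show ?thesis using z by (intro exI[of _ ws']) auto
  qed
  from o consider "x \<in> A1" | "x \<in> S" | D where "(D, x) \<in> R1" "D \<subseteq> set xs"
    unfolding okd_def by blast
  then show ?case
  proof cases
    case 1
    then show ?thesis using key[of "{}"] ax w by fastforce
  next
    case 2
    then have "dvalid A2 S R2 (ws @ [x])" using w by (auto simp: dvalid_snoc okd_def)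
    then show ?thesis using w by (intro exI[of _ "ws @ [x]"]) auto
  next
    case 3
    then show ?thesis using key[of D] ru w by fastforce
  qed
qed

theorem theorem2p5:
  fixes ar :: "'s::finite \<Rightarrow> nat"
    and C1 C2 :: "(('v, 's) form set \<times> ('v, 's) form) set"
    and A1 A2 :: "('v, 's) form set"
    and R1 R2 :: "(('v, 's) form set \<times> ('v, 's) form) set"
  defines "L \<equiv> formulas ar"
  shows "(is_logic L C1 \<and> is_logic L C2 \<and> C1 \<subseteq> C2 \<longrightarrow> lvi C1 \<subseteq> lvi C2)
       \<and> (A1 \<subseteq> L \<and> R1 \<subseteq> Pow L \<times> L \<and> A2 \<subseteq> L \<and> R2 \<subseteq> Pow L \<times> L \<and>
          hilbert L A1 R1 \<subseteq> hilbert L A2 R2 \<and>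
          (\<forall>\<alpha> \<in> A1. ({}, \<alpha>) \<in> hilbert_re L A2 R2) \<and>
          (\<forall>(\<Gamma>, \<alpha>) \<in> restrict_rules R1. (\<Gamma>, \<alpha>) \<in> hilbert_re L A2 R2)
         \<longrightarrow> hilbert_re L A1 R1 \<subseteq> hilbert_re L A2 R2)"
proof (intro conjI impI)
  show "lvi C1 \<subseteq> lvi C2" if "is_logic L C1 \<and> is_logic L C2 \<and> C1 \<subseteq> C2"
    using that unfolding lvi_def by blast
next
  assume H: "A1 \<subseteq> L \<and> R1 \<subseteq> Pow L \<times> L \<and> A2 \<subseteq> L \<and> R2 \<subseteq> Pow L \<times> L \<and>
          hilbert L A1 R1 \<subseteq> hilbert L A2 R2 \<and>
          (\<forall>\<alpha> \<in> A1. ({}, \<alpha>) \<in> hilbert_re L A2 R2) \<and>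
          (\<forall>(\<Gamma>, \<alpha>) \<in> restrict_rules R1. (\<Gamma>, \<alpha>) \<in> hilbert_re L A2 R2)"
  show "hilbert_re L A1 R1 \<subseteq> hilbert_re L A2 R2"
  proof clarify
    fix S a assume "(S, a) \<in> hilbert_re L A1 R1"
    then obtain xs where x: "S \<subseteq> L" "a \<in> L" "xs \<noteq> []" "last xs = a"
      "dvalid A1 S (restrict_rules R1) xs"
      unfolding hilbert_re_def hilbert_dvalid by blast
    from part2[of A1 L A2 "restrict_rules R2" "restrict_rules R1", OF _ _ x(5)] H
    obtain ws where w: "dvalid A2 S (restrict_rules R2) ws" "set xs \<subseteq> set ws"
      unfolding hilbert_re_def by blast
    have "a \<in> set ws" using x(3,4) w(2) by auto
    then obtain i where i: "i < length ws" "ws ! i = a" by (meson in_set_conv_nth)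
    let ?p = "take (Suc i) ws"
    have "?p \<noteq> []" "last ?p = a" using i by (auto simp: take_Suc_conv_app_nth)
    moreover have "dvalid A2 S (restrict_rules R2) ?p" using w(1) by (rule dvalid_take)
    ultimately show "(S, a) \<in> hilbert_re L A2 R2"
      unfolding hilbert_re_def hilbert_dvalid using x by blast
  qed
qed

end
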